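(* Let $(n_2,n_3,\dots)$ be the $\{0,1\}$-valued random sequence defined below, and for $N\ge 2$ let $\rho(n_2,\dots,n_N)$ be the joint law of $(n_2,\dots,n_N)$ and $$\hat\rho(z_2,\dots,z_N)=\sum_{n_2,\dots,n_N\in\{0,1\}} z_2^{n_2}\cdots z_N^{n_N}\rho(n_2,\dots,n_N)$$ its generating function. Write $\alpha_i=1-1/i$. Then for every $N\ge 3$, $$\hat\rho(z_2,\dots,z_N)=\hat\rho(z_2,\dots,z_{N-1})+(z_N-1)\,\hat\rho\left(z_2\alpha_2,\dots,z_{\lfloor\sqrt N\rfloor}\alpha_{\lfloor\sqrt N\rfloor},z_{\lfloor\sqrt N\rfloor+1},\dots,z_{N-1}\right),$$ and the probability $P_N=\Pr(n_N=1)$ satisfies $P_N=\hat\rho\left(\alpha_2,\dots,\alpha_{\lfloor\sqrt N\rfloor}\right)$ (the generating function of $(n_2,\dots,n_{\lfloor\sqrt N\rfloor})$ evaluated at these arguments).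
   Context: The random sequence models "random primes": $n_2=1$ almost surely, and for each $N\ge 3$, conditionally on $(n_2,\dots,n_{N-1})$, one has $n_N=1$ with probability $\prod_{i=2}^{\lfloor\sqrt N\rfloor}(1-1/i)^{n_i}$ and $n_N=0$ otherwise. (Interpretation: $n_k=1$ means $k$ is declared prime; $N$ is declared prime iff it fails to connect to each earlier declared prime $i\le\sqrt N$, connections occurring independently with probability $1/i$.) *)

theory Defs
  imports "HOL-Probability.Probability"
begin

text \<open>Configurations (n_2,...,n_N) are encoded as extensional functions
  nat => nat, supported on {2..N} (undefined outside), i.e. elements of
  PiE {2..N} (%_. {0,1}).\<close>

definition isqrt :: "nat \<Rightarrow> nat" where
  "isqrt N = nat \<lfloor>sqrt (real N)\<rfloor>"

definition alpha :: "nat \<Rightarrow> real" where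
  "alpha i = 1 - 1 / real i"

text \<open>Conditional probability that n_N = 1 given (n_2,...,n_{N-1}).\<close>
definition cond_prob :: "nat \<Rightarrow> (nat \<Rightarrow> nat) \<Rightarrow> real" where
  "cond_prob N n = (\<Prod>i\<in>{2..isqrt N}. alpha i ^ n i)"

primrec rho_pmf :: "nat \<Rightarrow> (nat \<Rightarrow> nat) pmf" where
  "rho_pmf 0 = return_pmf (\<lambda>_. undefined)"
| "rho_pmf (Suc N) =
     (if N = 0 then return_pmf (\<lambda>_. undefined)
      else if N = 1 then return_pmf ((\<lambda>_. undefined)(2 := 1))
      else do {
        n \<leftarrow> rho_pmf N;
        b \<leftarrow> bernoulli_pmf (cond_prob (Suc N) n);
        return_pmf (n(Suc N := (if b then 1 else 0)))
      })"

definition rho :: "nat \<Rightarrow> (nat \<Rightarrow> nat) \<Rightarrow> real" where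
  "rho N n = pmf (rho_pmf N) n"

definition rhohat :: "nat \<Rightarrow> (nat \<Rightarrow> real) \<Rightarrow> real" where
  "rhohat N z = (\<Sum>n\<in>PiE {2..N} (\<lambda>_. {0,1::nat}).
                    (\<Prod>i\<in>{2..N}. z i ^ n i) * rho N n)"

end

theory Submission
  imports Defs
begin

lemma set_rho: "set_pmf (rho_pmf N) \<subseteq> PiE {2..N} (\<lambda>_. {0,1::nat})"
proof (induction N)
  case 0 then show ?case by auto
next
  case (Suc N)
  show ?case
  proof (cases "N = 0 \<or> N = 1")
    case True then show ?thesis by (auto simp: PiE_def extensional_def)
  next
    case False
    show ?thesis
    proof
      fix m assume m: "m \<in> set_pmf (rho_pmf (Suc N))"
      then obtain n b where n: "n \<in> set_pmf (rho_pmf N)" and mb: "m = n(Suc N := (if b then 1 else 0))"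
        using False by auto
      have nP: "n \<in> PiE {2..N} (\<lambda>_. {0,1::nat})" using Suc.IH n by blast
      show "m \<in> PiE {2..Suc N} (\<lambda>_. {0,1::nat})"
        unfolding PiE_iff
      proof (intro conjI ballI)
        fix i assume "i \<in> {2..Suc N}"
        then show "m i \<in> {0,1}" using nP mb by (cases "i = Suc N") (auto simp: PiE_iff)
      next
        show "m \<in> extensional {2..Suc N}"
          using nP mb False by (auto simp: PiE_iff extensional_def)
      qed
    qed
  qed
qed

lemma finA: "finite (PiE {2..(N::nat)} (\<lambda>_. {0,1::nat}))"
  by (auto intro!: finite_PiE)

lemma E_sum: "measure_pmf.expectation (rho_pmf N) (f :: _ \<Rightarrow> real) =
   (\<Sum>a\<in>PiE {2..N} (\<lambda>_. {0,1::nat}). f a * pmf (rho_pmf N) a)"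
  by (rule integral_measure_pmf_real[OF finA]) (use set_rho in blast)

lemma rhohat_E: "rhohat N z = measure_pmf.expectation (rho_pmf N) (\<lambda>n. \<Prod>i\<in>{2..N}. z i ^ n i)"
  by (simp add: rhohat_def rho_def E_sum)

lemma cond_prob_01: "0 \<le> cond_prob N n \<and> cond_prob N n \<le> 1"
proof -
  have "\<And>i. i \<in> {2..isqrt N} \<Longrightarrow> 0 \<le> alpha i ^ n i \<and> alpha i ^ n i \<le> 1"
    by (auto simp: alpha_def intro!: power_le_one)
  then show ?thesis unfolding cond_prob_def
    by (auto intro!: prod_nonneg prod_le_1)
qed

lemma step:
  fixes h :: "(nat \<Rightarrow> nat) \<Rightarrow> real"
  assumes "N \<ge> 2"
  shows "measure_pmf.expectation (rho_pmf (Suc N)) h =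
     measure_pmf.expectation (rho_pmf N) (\<lambda>n. cond_prob (Suc N) n * h (n(Suc N := 1))
        + (1 - cond_prob (Suc N) n) * h (n(Suc N := 0)))"
proof -
  have inner: "measure_pmf.expectation (bernoulli_pmf (cond_prob (Suc N) n) \<bind>
        (\<lambda>b. return_pmf (n(Suc N := (if b then 1 else 0))))) h
      = cond_prob (Suc N) n * h (n(Suc N := 1)) + (1 - cond_prob (Suc N) n) * h (n(Suc N := 0))" for n
  proof -
    have "measure_pmf.expectation (bernoulli_pmf (cond_prob (Suc N) n) \<bind>
        (\<lambda>b. return_pmf (n(Suc N := (if b then 1 else 0))))) h
      = (\<Sum>b\<in>UNIV. pmf (bernoulli_pmf (cond_prob (Suc N) n)) b *\<^sub>R
          measure_pmf.expectation (return_pmf (n(Suc N := (if b then 1 else 0)))) h)"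
      by (rule pmf_expectation_bind) auto
    also have "\<dots> = cond_prob (Suc N) n * h (n(Suc N := 1)) + (1 - cond_prob (Suc N) n) * h (n(Suc N := 0))"
      using cond_prob_01[of "Suc N" n] by (simp add: UNIV_bool)
    finally show ?thesis .
  qed
  have "measure_pmf.expectation (rho_pmf (Suc N)) h =
     measure_pmf.expectation (rho_pmf N \<bind> (\<lambda>n. bernoulli_pmf (cond_prob (Suc N) n) \<bind>
        (\<lambda>b. return_pmf (n(Suc N := (if b then 1 else 0)))))) h"
    using assms by simp
  also have "\<dots> = (\<Sum>a\<in>PiE {2..N} (\<lambda>_. {0,1::nat}). pmf (rho_pmf N) a *\<^sub>R
      measure_pmf.expectation (bernoulli_pmf (cond_prob (Suc N) a) \<bind>
        (\<lambda>b. return_pmf (a(Suc N := (if b then 1 else 0))))) h)"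
    by (rule pmf_expectation_bind[OF finA _ set_rho]) auto
  also have "\<dots> = measure_pmf.expectation (rho_pmf N) (\<lambda>n. cond_prob (Suc N) n * h (n(Suc N := 1))
        + (1 - cond_prob (Suc N) n) * h (n(Suc N := 0)))"
    unfolding inner
    by (simp add: E_sum mult.commute)

  finally show ?thesis .
qed

lemma isqrt_le: assumes "N \<ge> 3" shows "isqrt N \<le> N - 1"
proof -
  have "real N < real N ^ 2" using assms by (simp add: power2_eq_square)
  then have "sqrt (real N) < sqrt (real N ^ 2)" by (rule real_sqrt_less_mono)
  then have "sqrt (real N) < real N" by simp
  then have "\<lfloor>sqrt (real N)\<rfloor> < int N" by linarith
  then show ?thesis unfolding isqrt_def using assms by linarith
qed

lemma E_const: "measure_pmf.expectation (rho_pmf N) (\<lambda>_. c::real) = c"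
  by simp

lemma marginal:
  fixes h :: "(nat \<Rightarrow> nat) \<Rightarrow> real"
  assumes "k \<le> M" and dep: "\<And>n n'. (\<forall>i\<in>{2..k}. n i = n' i) \<Longrightarrow> h n = h n'"
  shows "measure_pmf.expectation (rho_pmf M) h = measure_pmf.expectation (rho_pmf k) h"
proof (cases "k \<le> 1")
  case True
  then have "h = (\<lambda>_. h undefined)" using dep by (intro ext) auto
  then show ?thesis by (metis E_const)
next
  case False
  show ?thesis using assms(1)
  proof (induction M rule: dec_induct)
    case base then show ?case by simp
  next
    case (step M)
    have "measure_pmf.expectation (rho_pmf (Suc M)) h =
     measure_pmf.expectation (rho_pmf M) (\<lambda>n. cond_prob (Suc M) n * h (n(Suc M := 1))
        + (1 - cond_prob (Suc M) n) * h (n(Suc M := 0)))"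
      using step False by (intro Submission.step) auto
    also have "\<dots> = measure_pmf.expectation (rho_pmf M) h"
    proof -
      have "h (n(Suc M := b)) = h n" for n b using step by (intro dep) auto
      then show ?thesis by (simp add: algebra_simps)
    qed
    finally show ?case using step by simp
  qed
qed

lemma prod_upd:
  assumes "M \<ge> 1" shows "(\<Prod>i\<in>{2..Suc M}. z i ^ (n(Suc M := b)) i) = z (Suc M) ^ b * (\<Prod>i\<in>{2..M}. (z i :: real) ^ n i)"
proof -
  have "{2..Suc M} = insert (Suc M) {2..M}" using assms by auto
  then show ?thesis by (simp add: prod.insert_remove)
qed

lemma prod_alpha:
  assumes "k \<le> M"
  shows "(\<Prod>i\<in>{2..k}. alpha i ^ n i) * (\<Prod>i\<in>{2..M}. z i ^ n i)
       = (\<Prod>i\<in>{2..M}. (if i \<le> k then z i * alpha i else z i) ^ n i)"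
proof -
  have "(\<Prod>i\<in>{2..M}. (if i \<le> k then z i * alpha i else z i) ^ n i)
      = (\<Prod>i\<in>{2..M}. z i ^ n i * (if i \<le> k then alpha i ^ n i else 1))"
    by (intro prod.cong) (auto simp: power_mult_distrib)
  also have "\<dots> = (\<Prod>i\<in>{2..M}. z i ^ n i) * (\<Prod>i\<in>{2..M}. (if i \<le> k then alpha i ^ n i else 1))"
    by (rule prod.distrib)
  also have "(\<Prod>i\<in>{2..M}. (if i \<le> k then alpha i ^ n i else 1)) = (\<Prod>i\<in>{x\<in>{2..M}. x \<le> k}. alpha i ^ n i)"
    by (rule prod.inter_filter[symmetric]) auto
  also have "{x\<in>{2..M}. x \<le> k} = {2..k}" using assms by auto
  finally show ?thesis by simp
qed

theorem mainTheorem12: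
  fixes N :: nat and z :: "nat \<Rightarrow> real"
  assumes "N \<ge> 3"
  shows "rhohat N z = rhohat (N - 1) z
           + (z N - 1) * rhohat (N - 1) (\<lambda>i. if i \<le> isqrt N then z i * alpha i else z i)
         \<and> measure_pmf.prob (rho_pmf N) {n. n N = 1} = rhohat (isqrt N) alpha"
proof -
  obtain M where NM: "N = Suc M" and M2: "M \<ge> 2" using assms by (cases N) auto
  have kM: "isqrt N \<le> M" using isqrt_le[OF assms] NM by simp
  let ?z' = "\<lambda>i. if i \<le> isqrt N then z i * alpha i else z i"
  have part1: "rhohat N z = rhohat (N - 1) z + (z N - 1) * rhohat (N - 1) ?z'"
  proof -
    have "rhohat N z = measure_pmf.expectation (rho_pmf M) (\<lambda>n. cond_prob N n * (\<Prod>i\<in>{2..Suc M}. z i ^ (n(Suc M := 1)) i)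
        + (1 - cond_prob N n) * (\<Prod>i\<in>{2..Suc M}. z i ^ (n(Suc M := 0)) i))"
      unfolding rhohat_E NM using M2 by (rule step)
    also have "\<dots> = measure_pmf.expectation (rho_pmf M) (\<lambda>n. (\<Prod>i\<in>{2..M}. z i ^ n i)
        + (z N - 1) * (\<Prod>i\<in>{2..M}. ?z' i ^ n i))"
    proof (intro Bochner_Integration.integral_cong refl)
      fix n :: "nat \<Rightarrow> nat"
      have eq: "cond_prob N n * (\<Prod>i\<in>{2..M}. z i ^ n i) = (\<Prod>i\<in>{2..M}. ?z' i ^ n i)"
        unfolding cond_prob_def by (rule prod_alpha[OF kM])
      show "cond_prob N n * (\<Prod>i\<in>{2..Suc M}. z i ^ (n(Suc M := 1)) i)
        + (1 - cond_prob N n) * (\<Prod>i\<in>{2..Suc M}. z i ^ (n(Suc M := 0)) i)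
        = (\<Prod>i\<in>{2..M}. z i ^ n i) + (z N - 1) * (\<Prod>i\<in>{2..M}. ?z' i ^ n i)"
        using eq M2 unfolding NM by (simp add: prod_upd algebra_simps)
    qed
    also have "\<dots> = rhohat (N - 1) z + (z N - 1) * rhohat (N - 1) ?z'"
      unfolding rhohat_E E_sum NM
      by (simp add: sum.distrib sum_distrib_left sum_subtractf algebra_simps)
    finally show ?thesis .
  qed
  have part2: "measure_pmf.prob (rho_pmf N) {n. n N = 1} = rhohat (isqrt N) alpha"
  proof -
    have "measure_pmf.prob (rho_pmf N) {n. n N = 1}
        = measure_pmf.expectation (rho_pmf (Suc M)) (indicator {n. n (Suc M) = 1})"
      by (simp add: NM)
    also have "\<dots> = measure_pmf.expectation (rho_pmf M) (\<lambda>n. cond_prob (Suc M) n)"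
      using M2 by (subst step) (auto simp: indicator_def)
    also have "\<dots> = measure_pmf.expectation (rho_pmf (isqrt N)) (\<lambda>n. cond_prob N n)"
      unfolding NM[symmetric] using kM
      by (intro marginal) (auto simp: cond_prob_def intro!: prod.cong)
    also have "\<dots> = rhohat (isqrt N) alpha"
      by (simp add: rhohat_E cond_prob_def)
    finally show ?thesis .
  qed
  show ?thesis using part1 part2 by blast
qed

end
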